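(* Let $G$ be a graph with $n$ vertices and $m$ edges, and let $\mathbf{c}=(c_1,\ldots,c_s)$ be a composition of $n$ into $s$ positive parts; write $e_k=E_k(c_1,\ldots,c_s)$. Under a uniformly random $\mathbf{c}$-coloring of $G$, let $M_i(G)$ be the number of edges both of whose ends have color $i$ ($i\in[s]$), $M(G)=\sum_i M_i(G)$ the number of monochromatic edges and $L(G)=m-M(G)$ the number of edges whose ends receive different colors (so $L(G)$ and $M(G)$ have the same variance). Then for $i=1,\ldots,s$ the mean and variance of $M_i(G)$ are $$\overline{M}_i(G)=m\frac{(c_i)_2}{(n)_2},$$ $$\sigma_i^2(G)=\frac{(c_i)_3(n-c_i)}{(n)_4}\Sigma_2(G)-\Big(\Big[\frac{(c_i)_2}{(n)_2}\Big]^2-\frac{(c_i)_4}{(n)_4}\Big)m^2+\Big(\frac{(c_i)_2}{(n)_2}-2\frac{(c_i)_3}{(n)_3}+\frac{(c_i)_4}{(n)_4}\Big)m.$$ The means of $L(G)$ and $M(G)$ are $$\mathbb{E}[L(G)]=\frac{2me_2}{(n)_2},\qquad \mathbb{E}[M(G)]=\frac{m}{(n)_2}\sum_{i=1}^s(c_i)_2,$$ and their common variance is $$\sigma^2(G)=(a(\mathbf{c})-b(\mathbf{c}))\Sigma_2(G)+m^2\Big(b(\mathbf{c})-4\Big[\frac{e_2}{(n)_2}\Big]^2\Big)+m\Big(\frac{2e_2}{(n)_2}-2a(\mathbf{c})+b(\mathbf{c})\Big),$$ where $$a(\mathbf{c})=\frac{e_2}{(n)_2}+\frac{3e_3}{(n)_3},\qquad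 b(\mathbf{c})=\frac{4}{(n)_4}\big(e_2^2-(n-1)e_2-3e_3\big).$$
   Context: A $\mathbf{c}$-coloring is a surjective map $f:V(G)\to[s]$ with $|f^{-1}(i)|=c_i$ for each $i$; the set of such colorings carries the uniform probability measure. $\Sigma_2(G)$ is the sum of the squares of the vertex degrees of $G$. $(x)_b=x(x-1)\cdots(x-b+1)$ is the falling factorial ($(x)_0=1$, $(x)_b=0$ if $b>x$). $E_k(X_1,\ldots,X_s)=\sum_{A\subseteq[s],|A|=k}\prod_{i\in A}X_i$, with $E_0=1$ and $E_k=0$ for $k>s$. *)

theory Defs
  imports "HOL-Probability.Probability"
begin

definition ffact :: "real \<Rightarrow> nat \<Rightarrow> real" where
  "ffact x b = (\<Prod>j<b. x - real j)"

definition esym :: "nat \<Rightarrow> nat \<Rightarrow> (nat \<Rightarrow> real) \<Rightarrow> real" where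
  "esym k s X = (\<Sum>A\<in>{A. A \<subseteq> {1..s} \<and> card A = k}. \<Prod>i\<in>A. X i)"

definition simple_graph :: "'a set \<Rightarrow> 'a set set \<Rightarrow> bool" where
  "simple_graph V E \<longleftrightarrow> finite V \<and> (\<forall>e\<in>E. e \<subseteq> V \<and> card e = 2)"

definition degree :: "'a set set \<Rightarrow> 'a \<Rightarrow> nat" where
  "degree E v = card {e\<in>E. v \<in> e}"

definition Sigma2 :: "'a set \<Rightarrow> 'a set set \<Rightarrow> nat" where
  "Sigma2 V E = (\<Sum>v\<in>V. (degree E v)^2)"

definition composition :: "nat \<Rightarrow> nat \<Rightarrow> (nat \<Rightarrow> nat) \<Rightarrow> bool" where
  "composition n s c \<longleftrightarrow> (\<forall>i\<in>{1..s}. 0 < c i) \<and> (\<Sum>i=1..s. c i) = n"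

definition colorings :: "'a set \<Rightarrow> nat \<Rightarrow> (nat \<Rightarrow> nat) \<Rightarrow> ('a \<Rightarrow> nat) set" where
  "colorings V s c = {f. f \<in> V \<rightarrow>\<^sub>E {1..s} \<and> f ` V = {1..s} \<and>
      (\<forall>i\<in>{1..s}. card {v\<in>V. f v = i} = c i)}"

definition coloring_pmf :: "'a set \<Rightarrow> nat \<Rightarrow> (nat \<Rightarrow> nat) \<Rightarrow> ('a \<Rightarrow> nat) pmf" where
  "coloring_pmf V s c = pmf_of_set (colorings V s c)"

text \<open>M_i: edges both of whose ends have color i; M: monochromatic edges;
  L: edges whose ends receive different colors.\<close>
definition Mi :: "'a set set \<Rightarrow> nat \<Rightarrow> ('a \<Rightarrow> nat) \<Rightarrow> real" where
  "Mi E i f = real (card {e\<in>E. \<forall>v\<in>e. f v = i})"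

definition Mono :: "'a set set \<Rightarrow> ('a \<Rightarrow> nat) \<Rightarrow> real" where
  "Mono E f = real (card {e\<in>E. \<exists>i. \<forall>v\<in>e. f v = i})"

definition Bichr :: "'a set set \<Rightarrow> ('a \<Rightarrow> nat) \<Rightarrow> real" where
  "Bichr E f = real (card {e\<in>E. \<not> (\<exists>i. \<forall>v\<in>e. f v = i)})"

end

theory Submission
  imports Defs
begin


lemma perm_exists:
  assumes "finite V" "x1 \<subseteq> V" "x2 \<subseteq> V" "x1 \<inter> x2 = {}" "y1 \<subseteq> V" "y2 \<subseteq> V"
    "y1 \<inter> y2 = {}" "card y1 = card x1" "card y2 = card x2"
  shows "\<exists>\<pi>. bij_betw \<pi> V V \<and> \<pi> ` y1 = x1 \<and> \<pi> ` y2 = x2"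
proof -
  have fin: "finite x1" "finite x2" "finite y1" "finite y2"
    using assms finite_subset by metis+
  obtain g1 where g1: "bij_betw g1 y1 x1" using finite_same_card_bij fin assms by metis
  obtain g2 where g2: "bij_betw g2 y2 x2" using finite_same_card_bij fin assms by metis
  have "card (V - (y1 \<union> y2)) = card V - (card y1 + card y2)"
    using assms fin by (simp add: card_Diff_subset card_Un_disjoint)
  moreover have "card (V - (x1 \<union> x2)) = card V - (card x1 + card x2)"
    using assms fin by (simp add: card_Diff_subset card_Un_disjoint)
  ultimately obtain g3 where g3: "bij_betw g3 (V - (y1 \<union> y2)) (V - (x1 \<union> x2))"
    using finite_same_card_bij assms by (metis finite_Diff)
  define \<pi> where "\<pi> v = (if v \<in> y1 then g1 v else if v \<in> y2 then g2 v else g3 v)" for v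
  have b1: "bij_betw \<pi> y1 x1" using g1 by (subst bij_betw_cong[of _ _ g1]) (auto simp: \<pi>_def)
  have b2: "bij_betw \<pi> y2 x2" using g2 assms(7) by (subst bij_betw_cong[of _ _ g2]) (auto simp: \<pi>_def)
  have b3: "bij_betw \<pi> (V - (y1 \<union> y2)) (V - (x1 \<union> x2))" using g3
    by (subst bij_betw_cong[of _ _ g3]) (auto simp: \<pi>_def)
  have "bij_betw \<pi> (y1 \<union> y2 \<union> (V - (y1 \<union> y2))) (x1 \<union> x2 \<union> (V - (x1 \<union> x2)))"
    by (intro bij_betw_combine b1 b2 b3) (use assms in auto)
  moreover have "y1 \<union> y2 \<union> (V - (y1 \<union> y2)) = V" "x1 \<union> x2 \<union> (V - (x1 \<union> x2)) = V"
    using assms by auto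
  ultimately show ?thesis using b1 b2 bij_betw_imp_surj_on by metis
qed

lemma col_range: "f \<in> colorings V s c \<Longrightarrow> v \<in> V \<Longrightarrow> f v \<in> {1..s}"
  unfolding colorings_def by auto

lemma col_card: "f \<in> colorings V s c \<Longrightarrow> i \<in> {1..s} \<Longrightarrow> card {v\<in>V. f v = i} = c i"
  unfolding colorings_def by auto

lemma col_ext: "f \<in> colorings V s c \<Longrightarrow> v \<notin> V \<Longrightarrow> f v = undefined"
  unfolding colorings_def by (auto simp: PiE_def extensional_def)

definition permc :: "'a set \<Rightarrow> ('a \<Rightarrow> 'a) \<Rightarrow> ('a \<Rightarrow> nat) \<Rightarrow> ('a \<Rightarrow> nat)" where
  "permc V \<pi> f = (\<lambda>v. if v \<in> V then f (\<pi> v) else undefined)"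

lemma permc_col:
  assumes \<pi>: "bij_betw \<pi> V V" and f: "f \<in> colorings V s c"
  shows "permc V \<pi> f \<in> colorings V s c"
proof -
  have im: "\<pi> ` V = V" using \<pi> bij_betw_imp_surj_on by metis
  have "\<forall>v\<in>V. f (\<pi> v) \<in> {1..s}" using col_range[OF f] im by blast
  then have 1: "permc V \<pi> f \<in> V \<rightarrow>\<^sub>E {1..s}"
    by (auto simp: permc_def)
  have "permc V \<pi> f ` V = f ` (\<pi> ` V)" by (auto simp: permc_def)
  also have "\<dots> = {1..s}" using f im unfolding colorings_def by auto
  finally have 2: "permc V \<pi> f ` V = {1..s}" .
  have 3: "card {v\<in>V. permc V \<pi> f v = i} = c i" if i: "i \<in> {1..s}" for i
  proof -
    have "\<pi> ` {v\<in>V. permc V \<pi> f v = i} = {u\<in>V. f u = i}"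
      using im by (auto simp: permc_def)
    moreover have "inj_on \<pi> {v\<in>V. permc V \<pi> f v = i}"
      using \<pi> unfolding bij_betw_def by (auto intro: inj_on_subset)
    ultimately show ?thesis using card_image col_card[OF f i] by metis
  qed
  show ?thesis unfolding colorings_def using 1 2 3 by blast
qed

lemma permc_inj:
  assumes \<pi>: "bij_betw \<pi> V V"
  shows "inj_on (permc V \<pi>) (colorings V s c)"
proof
  fix f g assume f: "f \<in> colorings V s c" and g: "g \<in> colorings V s c"
    and eq: "permc V \<pi> f = permc V \<pi> g"
  have im: "\<pi> ` V = V" using \<pi> bij_betw_imp_surj_on by metis
  show "f = g"
  proof
    fix u show "f u = g u"
    proof (cases "u \<in> V")
      case True
      then obtain v where "v \<in> V" "u = \<pi> v" using im by blast
      then show ?thesis using fun_cong[OF eq, of v] by (simp add: permc_def)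
    next
      case False then show ?thesis using col_ext f g by metis
    qed
  qed
qed

definition Rc :: "nat \<Rightarrow> nat \<Rightarrow> 'a set \<times> 'a set \<Rightarrow> ('a \<Rightarrow> nat) \<Rightarrow> bool" where
  "Rc i j y f \<longleftrightarrow> (\<forall>v\<in>fst y. f v = i) \<and> (\<forall>v\<in>snd y. f v = j)"

definition Cfg :: "'a set \<Rightarrow> nat \<Rightarrow> nat \<Rightarrow> ('a set \<times> 'a set) set" where
  "Cfg V k1 k2 = {(y1, y2). y1 \<subseteq> V \<and> y2 \<subseteq> V \<and> y1 \<inter> y2 = {} \<and> card y1 = k1 \<and> card y2 = k2}"

lemma count_le:
  assumes V: "finite V" and x: "x \<in> Cfg V k1 k2" and y: "y \<in> Cfg V k1 k2"
  shows "card {f\<in>colorings V s c. Rc i j x f} \<le> card {f\<in>colorings V s c. Rc i j y f}"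
proof -
  obtain x1 x2 y1 y2 where xy: "x = (x1, x2)" "y = (y1, y2)" by fastforce
  obtain \<pi> where \<pi>: "bij_betw \<pi> V V" "\<pi> ` y1 = x1" "\<pi> ` y2 = x2"
    using perm_exists[OF V, of x1 x2 y1 y2] x y xy unfolding Cfg_def by auto
  have fin: "finite (colorings V s c)"
    by (rule finite_subset[of _ "V \<rightarrow>\<^sub>E {1..s}"]) (auto simp: colorings_def V finite_PiE)
  have "permc V \<pi> ` {f\<in>colorings V s c. Rc i j x f} \<subseteq> {f\<in>colorings V s c. Rc i j y f}"
  proof
    fix g assume "g \<in> permc V \<pi> ` {f\<in>colorings V s c. Rc i j x f}"
    then obtain f where f: "f \<in> colorings V s c" "Rc i j x f" "g = permc V \<pi> f" by blast
    have "y1 \<subseteq> V" "y2 \<subseteq> V" using y xy unfolding Cfg_def by auto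
    then have "Rc i j y g" using f \<pi> xy by (auto simp: Rc_def permc_def)
    then show "g \<in> {f\<in>colorings V s c. Rc i j y f}" using permc_col[OF \<pi>(1) f(1)] f by blast
  qed
  moreover have "inj_on (permc V \<pi>) {f\<in>colorings V s c. Rc i j x f}"
    using permc_inj[OF \<pi>(1)] by (rule inj_on_subset) auto
  ultimately show ?thesis using card_inj_on_le fin by (metis (no_types, lifting) finite_subset mem_Collect_eq subsetI)
qed

lemma fin_col: "finite V \<Longrightarrow> finite (colorings V s c)"
  by (rule finite_subset[of _ "V \<rightarrow>\<^sub>E {1..s}"]) (auto simp: colorings_def finite_PiE)

lemma card_Cfg:
  assumes V: "finite V"
  shows "card (Cfg V k1 k2) = (card V choose k1) * ((card V - k1) choose k2)"
proof -
  have eq: "Cfg V k1 k2 = Sigma {y1. y1 \<subseteq> V \<and> card y1 = k1} (\<lambda>y1. {y2. y2 \<subseteq> V - y1 \<and> card y2 = k2})"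
    unfolding Cfg_def by auto
  have fA: "finite {y1. y1 \<subseteq> V \<and> card y1 = k1}" using V by auto
  have "card (Cfg V k1 k2) = (\<Sum>y1\<in>{y1. y1 \<subseteq> V \<and> card y1 = k1}. card {y2. y2 \<subseteq> V - y1 \<and> card y2 = k2})"
    unfolding eq using fA V by (subst card_SigmaI) auto
  also have "\<dots> = (\<Sum>y1\<in>{y1. y1 \<subseteq> V \<and> card y1 = k1}. (card V - k1) choose k2)"
  proof (rule sum.cong)
    fix y1 assume "y1 \<in> {y1. y1 \<subseteq> V \<and> card y1 = k1}"
    then have "card (V - y1) = card V - k1" using V by (auto simp: card_Diff_subset finite_subset)
    then show "card {y2. y2 \<subseteq> V - y1 \<and> card y2 = k2} = (card V - k1) choose k2"
      using n_subsets[of "V - y1" k2] V by simp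
  qed simp
  also have "\<dots> = (card V choose k1) * ((card V - k1) choose k2)"
    using n_subsets[OF V, of k1] by simp
  finally show ?thesis .
qed

lemma fiber_count:
  assumes V: "finite V" and f: "f \<in> colorings V s c" and ij: "i \<noteq> j" and i: "i \<in> {1..s}"
    and j: "k2 = 0 \<or> j \<in> {1..s}"
  shows "card {y\<in>Cfg V k1 k2. Rc i j y f} = (c i choose k1) * (c j choose k2)"
proof -
  have eq: "{y\<in>Cfg V k1 k2. Rc i j y f} =
      {y1. y1 \<subseteq> {v\<in>V. f v = i} \<and> card y1 = k1} \<times> {y2. y2 \<subseteq> {v\<in>V. f v = j} \<and> card y2 = k2}"
    unfolding Cfg_def Rc_def using ij by auto
  have "card {y\<in>Cfg V k1 k2. Rc i j y f} = (card {v\<in>V. f v = i} choose k1) * (card {v\<in>V. f v = j} choose k2)"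
    unfolding eq card_cartesian_product using V by (simp add: n_subsets)
  moreover have "(card {v\<in>V. f v = j} choose k2) = (c j choose k2)"
    using j col_card[OF f] by auto
  ultimately show ?thesis using col_card[OF f i] by simp
qed

lemma dbl_count:
  assumes "finite A" "finite B"
  shows "(\<Sum>a\<in>A. card {b\<in>B. R a b}) = (\<Sum>b\<in>B. card {a\<in>A. R a b})"
proof -
  have "(\<Sum>a\<in>A. card {b\<in>B. R a b}) = (\<Sum>a\<in>A. \<Sum>b\<in>B. if R a b then 1 else 0)"
    using assms by (simp add: sum.inter_filter[symmetric])
  also have "\<dots> = (\<Sum>b\<in>B. \<Sum>a\<in>A. if R a b then 1 else 0)" by (rule sum.swap)
  also have "\<dots> = (\<Sum>b\<in>B. card {a\<in>A. R a b})"
    using assms by (simp add: sum.inter_filter[symmetric])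
  finally show ?thesis .
qed

lemma cfg_count:
  assumes V: "finite V" and x: "x \<in> Cfg V k1 k2" and ij: "i \<noteq> j" and i: "i \<in> {1..s}"
    and j: "k2 = 0 \<or> j \<in> {1..s}"
  shows "card {f\<in>colorings V s c. Rc i j x f} * ((card V choose k1) * ((card V - k1) choose k2))
     = card (colorings V s c) * ((c i choose k1) * (c j choose k2))"
proof -
  let ?C = "colorings V s c"
  have fC: "finite (Cfg V k1 k2)" unfolding Cfg_def
    by (rule finite_subset[of _ "Pow V \<times> Pow V"]) (use V in auto)
  have const: "card {f\<in>?C. Rc i j y f} = card {f\<in>?C. Rc i j x f}" if y: "y \<in> Cfg V k1 k2" for y
    using count_le[OF V x y, of s c i j] count_le[OF V y x, of s c i j] by simp
  have "card {f\<in>?C. Rc i j x f} * card (Cfg V k1 k2) = (\<Sum>y\<in>Cfg V k1 k2. card {f\<in>?C. Rc i j y f})"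
    using const by simp
  also have "\<dots> = (\<Sum>f\<in>?C. card {y\<in>Cfg V k1 k2. Rc i j y f})"
    by (rule dbl_count[OF fC fin_col[OF V]])
  also have "\<dots> = (\<Sum>f\<in>?C. (c i choose k1) * (c j choose k2))"
    using fiber_count[OF V _ ij i j] by simp
  finally show ?thesis using card_Cfg[OF V] by simp
qed



lemma esym_sets_Suc:
  assumes "k > 0"
  shows "{A. A \<subseteq> {1..Suc s} \<and> card A = k} =
     {A. A \<subseteq> {1..s} \<and> card A = k} \<union> insert (Suc s) ` {A. A \<subseteq> {1..s} \<and> card A = k - 1}"
proof (rule set_eqI, rule iffI)
  fix A assume A: "A \<in> {A. A \<subseteq> {1..Suc s} \<and> card A = k}"
  show "A \<in> {A. A \<subseteq> {1..s} \<and> card A = k} \<union> insert (Suc s) ` {A. A \<subseteq> {1..s} \<and> card A = k - 1}"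
  proof (cases "Suc s \<in> A")
    case True
    have fA: "finite A" using A finite_subset by blast
    have "A = insert (Suc s) (A - {Suc s})" using True by blast
    moreover have "A - {Suc s} \<subseteq> {1..s}" using A by (auto simp: le_Suc_eq)
    moreover have "card (A - {Suc s}) = k - 1" using A True fA by simp
    ultimately show ?thesis by blast
  next
    case False
    then have "A \<subseteq> {1..s}" using A by (auto simp: le_Suc_eq)
    then show ?thesis using A by blast
  qed
next
  fix A assume "A \<in> {A. A \<subseteq> {1..s} \<and> card A = k} \<union> insert (Suc s) ` {A. A \<subseteq> {1..s} \<and> card A = k - 1}"
  then show "A \<in> {A. A \<subseteq> {1..Suc s} \<and> card A = k}"
  proof
    assume "A \<in> {A. A \<subseteq> {1..s} \<and> card A = k}" then show ?thesis by auto
  next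
    assume "A \<in> insert (Suc s) ` {A. A \<subseteq> {1..s} \<and> card A = k - 1}"
    then obtain B where B: "B \<subseteq> {1..s}" "card B = k - 1" "A = insert (Suc s) B" by blast
    have "finite B" "Suc s \<notin> B" using B finite_subset by auto
    then show ?thesis using B assms by auto
  qed
qed

lemma esym_Suc:
  assumes "k > 0"
  shows "esym k (Suc s) X = esym k s X + X (Suc s) * esym (k - 1) s X"
proof -
  let ?S = "\<lambda>k. {A. A \<subseteq> {1..s} \<and> card A = k}"
  have fin: "finite (?S k)" for k by (rule finite_subset[of _ "Pow {1..s}"]) auto
  have disj: "?S k \<inter> insert (Suc s) ` ?S (k - 1) = {}" by auto
  have inj: "inj_on (insert (Suc s)) (?S (k - 1))"
    by (rule inj_onI) (metis (no_types, lifting) atLeastAtMost_iff insert_ident mem_Collect_eq not_less_eq_eq order_refl subsetD)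
  have "esym k (Suc s) X = (\<Sum>A\<in>?S k. prod X A) + (\<Sum>A\<in>insert (Suc s) ` ?S (k - 1). prod X A)"
    unfolding esym_def esym_sets_Suc[OF assms] by (rule sum.union_disjoint) (use fin disj in auto)
  also have "(\<Sum>A\<in>insert (Suc s) ` ?S (k - 1). prod X A) = (\<Sum>A\<in>?S (k - 1). prod X (insert (Suc s) A))"
    by (rule sum.reindex[OF inj, unfolded comp_def])
  also have "\<dots> = (\<Sum>A\<in>?S (k - 1). X (Suc s) * prod X A)"
  proof (rule sum.cong)
    fix A assume "A \<in> ?S (k - 1)"
    then have "finite A" "Suc s \<notin> A" using finite_subset by auto
    then show "prod X (insert (Suc s) A) = X (Suc s) * prod X A" by simp
  qed simp
  finally show ?thesis unfolding esym_def by (simp add: sum_distrib_left)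
qed

lemma esym_0: "esym 0 s X = 1"
proof -
  have "{A. A \<subseteq> {1..s} \<and> card A = 0} = {{}}" by (auto dest: finite_subset)
  then show ?thesis by (simp add: esym_def)
qed

lemma esym_1: "esym 1 s X = (\<Sum>i=1..s. X i)"
proof (induction s)
  case 0
  have "{A. A \<subseteq> {1..0::nat} \<and> card A = 1} = {}" by auto
  then show ?case by (simp add: esym_def)
next
  case (Suc s)
  have e: "esym 1 (Suc s) X = esym 1 s X + X (Suc s) * esym 0 s X" using esym_Suc[of 1] by simp
  show ?case unfolding e Suc.IH esym_0 by simp
qed

lemma esym_Suc0: "esym (Suc 0) s X = (\<Sum>i=1..s. X i)"
  using esym_1 by simp

lemma esym_2: "esym 2 s X = ((\<Sum>i=1..s. X i)^2 - (\<Sum>i=1..s. X i ^ 2)) / 2"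
proof (induction s)
  case 0
  have "{A. A \<subseteq> {1..0::nat} \<and> card A = 2} = {}" by auto
  then show ?case by (simp add: esym_def)
next
  case (Suc s)
  have e: "esym 2 (Suc s) X = esym 2 s X + X (Suc s) * esym 1 s X" using esym_Suc[of 2] by simp
  have alg: "((a::real)^2 - b)/2 + x*a = ((a+x)^2 - (b+x^2))/2"
    for a b x by (simp add: field_simps power2_eq_square)
  have s1: "(\<Sum>i=1..Suc s. X i) = (\<Sum>i=1..s. X i) + X (Suc s)" by simp
  have s2: "(\<Sum>i=1..Suc s. X i ^ 2) = (\<Sum>i=1..s. X i ^ 2) + X (Suc s) ^ 2" by simp
  show ?case unfolding e Suc.IH esym_1 s1 s2 by (rule alg)
qed

lemma esym_3: "esym 3 s X = ((\<Sum>i=1..s. X i)^3 - 3 * (\<Sum>i=1..s. X i) * (\<Sum>i=1..s. X i ^ 2)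
    + 2 * (\<Sum>i=1..s. X i ^ 3)) / 6"
proof (induction s)
  case 0
  have "{A. A \<subseteq> {1..0::nat} \<and> card A = 3} = {}" by auto
  then show ?case by (simp add: esym_def)
next
  case (Suc s)
  have e: "esym 3 (Suc s) X = esym 3 s X + X (Suc s) * esym 2 s X" using esym_Suc[of 3] by simp
  have alg: "((a::real)^3 - 3*a*b + 2*c)/6 + x*((a^2 - b)/2) = ((a+x)^3 - 3*(a+x)*(b+x^2) + 2*(c+x^3))/6"
    for a b c x by (simp add: field_simps power3_eq_cube power2_eq_square)
  have s1: "(\<Sum>i=1..Suc s. X i) = (\<Sum>i=1..s. X i) + X (Suc s)" by simp
  have s2: "(\<Sum>i=1..Suc s. X i ^ 2) = (\<Sum>i=1..s. X i ^ 2) + X (Suc s) ^ 2" by simp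
  have s3: "(\<Sum>i=1..Suc s. X i ^ 3) = (\<Sum>i=1..s. X i ^ 3) + X (Suc s) ^ 3" by simp
  show ?case unfolding e Suc.IH esym_2 s1 s2 s3 by (rule alg)
qed

lemma ffact2: "ffact x 2 = x * (x - 1)"
  by (simp add: ffact_def numeral_eq_Suc lessThan_Suc)
lemma ffact3: "ffact x 3 = x * (x - 1) * (x - 2)"
  by (simp add: ffact_def numeral_eq_Suc lessThan_Suc)
lemma ffact4: "ffact x 4 = x * (x - 1) * (x - 2) * (x - 3)"
  by (simp add: ffact_def numeral_eq_Suc lessThan_Suc)

lemma binom_ffact: "real (a choose k) * fact k = ffact (real a) k"
  by (simp add: binomial_gbinomial gbinomial_mult_fact' ffact_def atLeast0LessThan)


lemma col_nonempty:
  assumes V: "finite V" and comp: "composition (card V) s c"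
  shows "colorings V s c \<noteq> {}"
proof -
  define T where "T = (SIGMA i:{1..s}. {..<c i})"
  have "card T = (\<Sum>i=1..s. c i)" unfolding T_def by simp
  then have "card T = card V" using comp unfolding composition_def by simp
  moreover have "finite T" unfolding T_def by auto
  ultimately obtain g where g: "bij_betw g V T" using finite_same_card_bij V by metis
  define f where "f v = (if v \<in> V then fst (g v) else undefined)" for v
  have gV: "g ` V = T" and ginj: "inj_on g V" using g unfolding bij_betw_def by auto
  have "fst (g v) \<in> {1..s}" if "v \<in> V" for v
  proof -
    have "g v \<in> T" using gV that by blast
    then show ?thesis unfolding T_def by auto
  qed
  then have 1: "f \<in> V \<rightarrow>\<^sub>E {1..s}" unfolding f_def by auto
  have "f ` V = (fst \<circ> g) ` V" by (rule image_cong) (auto simp: f_def)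
  also have "\<dots> = fst ` T" using gV by (metis image_comp)
  also have "fst ` T = {1..s}"
  proof
    show "fst ` T \<subseteq> {1..s}" unfolding T_def by auto
    show "{1..s} \<subseteq> fst ` T"
    proof
      fix i assume i: "i \<in> {1..s}"
      then have "(i, 0) \<in> T" using comp unfolding T_def composition_def by auto
      then show "i \<in> fst ` T" by force
    qed
  qed
  finally have 2: "f ` V = {1..s}" .
  have 3: "card {v\<in>V. f v = i} = c i" if i: "i \<in> {1..s}" for i
  proof -
    have "g ` {v\<in>V. f v = i} = {i} \<times> {..<c i}"
    proof
      show "g ` {v\<in>V. f v = i} \<subseteq> {i} \<times> {..<c i}"
      proof
        fix t assume "t \<in> g ` {v\<in>V. f v = i}"
        then obtain v where v: "v \<in> V" "f v = i" "t = g v" by blast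
        then have "t \<in> T" using gV by blast
        moreover have "fst t = i" using v unfolding f_def by simp
        ultimately show "t \<in> {i} \<times> {..<c i}" unfolding T_def by (cases t) auto
      qed
      show "{i} \<times> {..<c i} \<subseteq> g ` {v\<in>V. f v = i}"
      proof
        fix t assume t: "t \<in> {i} \<times> {..<c i}"
        then have "t \<in> T" using i unfolding T_def by auto
        then obtain v where "v \<in> V" "g v = t" using gV by blast
        moreover then have "f v = i" using t unfolding f_def by auto
        ultimately show "t \<in> g ` {v\<in>V. f v = i}" by blast
      qed
    qed
    moreover have "inj_on g {v\<in>V. f v = i}" using ginj by (rule inj_on_subset) auto
    ultimately have "card {v\<in>V. f v = i} = card ({i} \<times> {..<c i})" using card_image by metis
    then show ?thesis by simp
  qed
  have "f \<in> colorings V s c" unfolding colorings_def using 1 2 3 by blast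
  then show ?thesis by blast
qed



lemma prob1:
  assumes V: "finite V" and W: "W \<subseteq> V" and i: "i \<in> {1..s}" and comp: "composition (card V) s c"
  shows "real (card {f\<in>colorings V s c. \<forall>v\<in>W. f v = i}) / real (card (colorings V s c))
       = ffact (c i) (card W) / ffact (card V) (card W)"
proof -
  let ?C = "colorings V s c" and ?k = "card W"
  have x: "(W, {}) \<in> Cfg V ?k 0" using W by (auto simp: Cfg_def)
  have "card {f\<in>?C. Rc i (Suc i) (W, {}) f} * ((card V choose ?k) * ((card V - ?k) choose 0))
     = card ?C * ((c i choose ?k) * (c (Suc i) choose 0))"
    by (rule cfg_count[OF V x _ i]) auto
  moreover have "{f\<in>?C. Rc i (Suc i) (W, {}) f} = {f\<in>?C. \<forall>v\<in>W. f v = i}" by (auto simp: Rc_def)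
  ultimately have eq: "card {f\<in>?C. \<forall>v\<in>W. f v = i} * (card V choose ?k) = card ?C * (c i choose ?k)" by simp
  have "real (card {f\<in>?C. \<forall>v\<in>W. f v = i}) * (real (card V choose ?k) * fact ?k)
      = real (card ?C) * (real (c i choose ?k) * fact ?k)"
    using arg_cong[OF eq, of real] by (simp only: of_nat_mult mult.assoc[symmetric])
  then have eq2: "real (card {f\<in>?C. \<forall>v\<in>W. f v = i}) * ffact (card V) ?k = real (card ?C) * ffact (c i) ?k"
    by (simp only: binom_ffact)
  have N: "real (card ?C) > 0" using col_nonempty[OF V comp] fin_col[OF V] card_gt_0_iff by auto
  have "?k \<le> card V" using W V card_mono by blast
  then have "real (card V choose ?k) > 0" by simp
  then have "ffact (card V) ?k > 0" using binom_ffact[of "card V" ?k] by (metis fact_gt_zero mult_pos_pos)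
  then show ?thesis using eq2 N by (simp add: field_simps)
qed

lemma prob2:
  assumes V: "finite V" and e: "e \<subseteq> V" "card e = 2" and e': "e' \<subseteq> V" "card e' = 2" and d: "e \<inter> e' = {}"
    and ij: "i \<noteq> j" and i: "i \<in> {1..s}" and j: "j \<in> {1..s}" and comp: "composition (card V) s c"
  shows "real (card {f\<in>colorings V s c. (\<forall>v\<in>e. f v = i) \<and> (\<forall>v\<in>e'. f v = j)}) / real (card (colorings V s c))
       = ffact (c i) 2 * ffact (c j) 2 / ffact (card V) 4"
proof -
  let ?C = "colorings V s c"
  have x: "(e, e') \<in> Cfg V 2 2" using e e' d by (auto simp: Cfg_def)
  have "card {f\<in>?C. Rc i j (e, e') f} * ((card V choose 2) * ((card V - 2) choose 2))
     = card ?C * ((c i choose 2) * (c j choose 2))"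
    by (rule cfg_count[OF V x ij i]) (use j in auto)
  moreover have "{f\<in>?C. Rc i j (e, e') f} = {f\<in>?C. (\<forall>v\<in>e. f v = i) \<and> (\<forall>v\<in>e'. f v = j)}" by (auto simp: Rc_def)
  ultimately have eq: "card {f\<in>?C. (\<forall>v\<in>e. f v = i) \<and> (\<forall>v\<in>e'. f v = j)} * ((card V choose 2) * ((card V - 2) choose 2))
      = card ?C * ((c i choose 2) * (c j choose 2))"
    by simp
  let ?A = "real (card {f\<in>?C. (\<forall>v\<in>e. f v = i) \<and> (\<forall>v\<in>e'. f v = j)})"
  have eqr: "?A * (real (card V choose 2) * real ((card V - 2) choose 2))
      = real (card ?C) * (real (c i choose 2) * real (c j choose 2))"
    using arg_cong[OF eq, of real] by (simp only: of_nat_mult)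
  have b: "real (a choose 2) = ffact (real a) 2 / 2" for a using binom_ffact[of a 2] by simp
  have n4: "card V \<ge> 4"
  proof -
    have "card (e \<union> e') = 4" using e e' d V by (simp add: card_Un_disjoint finite_subset)
    then show ?thesis using card_mono[OF V, of "e \<union> e'"] e e' by simp
  qed
  have r: "real (card V - 2) = real (card V) - 2" using n4 by simp
  have f4: "ffact (real (card V)) 4 = ffact (real (card V)) 2 * ffact (real (card V) - 2) 2"
    unfolding ffact2 ffact4 by (simp add: algebra_simps)
  have gen: "A * (x / 2 * (y / 2)) = N * (z / 2 * (w / 2)) \<Longrightarrow> A * (x * y) = N * (z * w)" for A N x y z w :: real
    by (simp add: field_simps)
  have eq2: "?A * ffact (card V) 4 = real (card ?C) * (ffact (c i) 2 * ffact (c j) 2)"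
    unfolding f4 by (rule gen) (use eqr in \<open>simp only: b r\<close>)
  have N: "real (card ?C) > 0" using col_nonempty[OF V comp] fin_col[OF V] card_gt_0_iff by auto
  have "ffact (card V) 4 > 0" using n4 unfolding ffact4 by simp
  then show ?thesis using eq2 N by (simp add: field_simps)
qed



definition Ind :: "nat \<Rightarrow> 'a set \<Rightarrow> ('a \<Rightarrow> nat) \<Rightarrow> real" where
  "Ind i e f = (if \<forall>v\<in>e. f v = i then 1 else 0)"

definition Gf :: "real \<Rightarrow> (nat \<Rightarrow> nat) \<Rightarrow> nat \<Rightarrow> nat \<Rightarrow> nat \<Rightarrow> real" where
  "Gf n c i j u = (if i = j then ffact (c i) u / ffact n u
     else if u = 4 then ffact (c i) 2 * ffact (c j) 2 / ffact n 4 else 0)"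

lemma card_ind: "finite A \<Longrightarrow> real (card {x\<in>A. Q x}) = (\<Sum>x\<in>A. if Q x then 1 else 0)"
  by (simp add: sum.inter_filter[symmetric])

lemma EIJ:
  assumes G: "simple_graph V E" and comp: "composition (card V) s c"
    and i: "i \<in> {1..s}" and j: "j \<in> {1..s}" and e: "e \<in> E" and e': "e' \<in> E"
  shows "(\<Sum>f\<in>colorings V s c. Ind i e f * Ind j e' f) / real (card (colorings V s c))
       = Gf (card V) c i j (card (e \<union> e'))"
proof -
  let ?C = "colorings V s c"
  have V: "finite V" and ee: "e \<subseteq> V" "card e = 2" "e' \<subseteq> V" "card e' = 2"
    using G e e' unfolding simple_graph_def by auto
  have fe: "finite e" "finite e'" using ee V finite_subset by auto
  have "(\<Sum>f\<in>?C. Ind i e f * Ind j e' f) = (\<Sum>f\<in>?C. if (\<forall>v\<in>e. f v = i) \<and> (\<forall>v\<in>e'. f v = j) then 1 else 0)"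
    by (rule sum.cong) (auto simp: Ind_def)
  also have "\<dots> = real (card {f\<in>?C. (\<forall>v\<in>e. f v = i) \<and> (\<forall>v\<in>e'. f v = j)})"
    using card_ind[OF fin_col[OF V]] by simp
  finally have S: "(\<Sum>f\<in>?C. Ind i e f * Ind j e' f) = real (card {f\<in>?C. (\<forall>v\<in>e. f v = i) \<and> (\<forall>v\<in>e'. f v = j)})" .
  have cu: "card (e \<union> e') + card (e \<inter> e') = 4" using card_Un_Int[OF fe] ee by simp
  show ?thesis
  proof (cases "i = j")
    case True
    have "{f\<in>?C. (\<forall>v\<in>e. f v = i) \<and> (\<forall>v\<in>e'. f v = j)} = {f\<in>?C. \<forall>v\<in>e \<union> e'. f v = i}"
      using True by auto
    then show ?thesis unfolding S using prob1[OF V _ i comp, of "e \<union> e'"] ee True by (simp add: Gf_def)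
  next
    case False
    show ?thesis
    proof (cases "e \<inter> e' = {}")
      case True
      then have "card (e \<union> e') = 4" using cu by simp
      then show ?thesis unfolding S using prob2[OF V ee True False i j comp] False by (simp add: Gf_def)
    next
      case ne: False
      then have "card (e \<inter> e') > 0" using fe by (simp add: card_gt_0_iff)
      then have c4: "card (e \<union> e') \<noteq> 4" using cu by simp
      have emp: "{f\<in>?C. (\<forall>v\<in>e. f v = i) \<and> (\<forall>v\<in>e'. f v = j)} = {}" using ne False by auto
      show ?thesis unfolding S emp using False c4 by (simp add: Gf_def)
    qed
  qed
qed

lemma S2_pairs:
  assumes G: "simple_graph V E"
  shows "Sigma2 V E = (\<Sum>p\<in>E \<times> E. card (fst p \<inter> snd p))"
proof -
  have V: "finite V" and EV: "\<forall>e\<in>E. e \<subseteq> V" using G unfolding simple_graph_def by auto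
  have fE: "finite E" by (rule finite_subset[of _ "Pow V"]) (use EV V in auto)
  have "Sigma2 V E = (\<Sum>v\<in>V. card {p\<in>E \<times> E. v \<in> fst p \<inter> snd p})"
    unfolding Sigma2_def degree_def
  proof (rule sum.cong)
    fix v assume "v \<in> V"
    have "{p\<in>E \<times> E. v \<in> fst p \<inter> snd p} = {e\<in>E. v \<in> e} \<times> {e\<in>E. v \<in> e}" by auto
    then show "card {e\<in>E. v \<in> e} ^ 2 = card {p\<in>E \<times> E. v \<in> fst p \<inter> snd p}"
      by (simp add: card_cartesian_product power2_eq_square)
  qed simp
  also have "\<dots> = (\<Sum>p\<in>E \<times> E. card {v\<in>V. v \<in> fst p \<inter> snd p})"
    by (rule dbl_count) (use V fE in auto)
  also have "\<dots> = (\<Sum>p\<in>E \<times> E. card (fst p \<inter> snd p))"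
  proof (rule sum.cong)
    fix p assume "p \<in> E \<times> E"
    then have "fst p \<subseteq> V" using EV by auto
    then have "{v\<in>V. v \<in> fst p \<inter> snd p} = fst p \<inter> snd p" by auto
    then show "card {v\<in>V. v \<in> fst p \<inter> snd p} = card (fst p \<inter> snd p)" by simp
  qed simp
  finally show ?thesis .
qed

lemma pairsum:
  assumes G: "simple_graph V E"
  shows "(\<Sum>p\<in>E \<times> E. g (card (fst p \<union> snd p))) =
     real (card E) * g 2 + (real (Sigma2 V E) - 2 * real (card E)) * g 3
     + (real (card E) ^ 2 + real (card E) - real (Sigma2 V E)) * g 4"
proof -
  have V: "finite V" and EV: "\<forall>e\<in>E. e \<subseteq> V \<and> card e = 2" using G unfolding simple_graph_def by auto
  have fE: "finite E" by (rule finite_subset[of _ "Pow V"]) (use EV V in auto)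
  let ?u = "\<lambda>p. card (fst p \<union> snd p)" and ?w = "\<lambda>p. card (fst p \<inter> snd p)"
  have uw: "?u p + ?w p = 4" "?w p \<le> 2" if "p \<in> E \<times> E" for p
  proof -
    have pe: "fst p \<in> E" "snd p \<in> E" using that by auto
    have "finite (fst p)" "finite (snd p)" "card (fst p) = 2" "card (snd p) = 2"
      using pe EV V by (meson finite_subset)+
    then show "?u p + ?w p = 4" "?w p \<le> 2" using card_Un_Int[of "fst p" "snd p"]
        card_mono[of "fst p" "fst p \<inter> snd p"]
      by auto
  qed
  have pt: "g (?u p) = g 4 + (g 3 - g 4) * real (?w p) + (g 2 - 2 * g 3 + g 4) * (if ?u p = 2 then 1 else 0)"
    if "p \<in> E \<times> E" for p
  proof -
    have "?w p = 0 \<or> ?w p = 1 \<or> ?w p = 2" using uw[OF that] by auto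
    then show ?thesis using uw(1)[OF that] by (auto simp: algebra_simps)
  qed
  have diag: "{p\<in>E \<times> E. ?u p = 2} = (\<lambda>e. (e, e)) ` E"
  proof
    show "{p\<in>E \<times> E. ?u p = 2} \<subseteq> (\<lambda>e. (e, e)) ` E"
    proof
      fix p assume p: "p \<in> {p\<in>E \<times> E. ?u p = 2}"
      then obtain a b where ab: "p = (a, b)" "a \<in> E" "b \<in> E" by auto
      have fa: "finite a" "finite b" "card a = 2" "card b = 2" using ab EV V by (meson finite_subset)+
      have "card (a \<union> b) = 2" using p ab by simp
      then have "a \<union> b = a" using card_subset_eq[of "a \<union> b" a] fa by (metis Un_upper1 card_seteq finite_Un order_refl)
      moreover have "a \<union> b = b" using \<open>card (a \<union> b) = 2\<close> fa by (metis Un_upper2 card_seteq finite_Un order_refl)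
      ultimately show "p \<in> (\<lambda>e. (e, e)) ` E" using ab by auto
    qed
    show "(\<lambda>e. (e, e)) ` E \<subseteq> {p\<in>E \<times> E. ?u p = 2}" using EV by auto
  qed
  have cdiag: "real (card {p\<in>E \<times> E. ?u p = 2}) = real (card E)"
    unfolding diag by (subst card_image) (auto intro: inj_onI)
  have "(\<Sum>p\<in>E \<times> E. g (?u p)) = (\<Sum>p\<in>E \<times> E. g 4 + (g 3 - g 4) * real (?w p) + (g 2 - 2 * g 3 + g 4) * (if ?u p = 2 then 1 else 0))"
    using pt by (rule sum.cong[OF refl])
  also have "\<dots> = g 4 * real (card (E \<times> E)) + (g 3 - g 4) * (\<Sum>p\<in>E \<times> E. real (?w p))
      + (g 2 - 2 * g 3 + g 4) * (\<Sum>p\<in>E \<times> E. if ?u p = 2 then 1 else 0)"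
    by (simp add: sum.distrib sum_distrib_left)
  also have "(\<Sum>p\<in>E \<times> E. real (?w p)) = real (Sigma2 V E)"
    using S2_pairs[OF G] by simp
  also have "(\<Sum>p\<in>E \<times> E. if ?u p = 2 then 1 else 0) = real (card E)"
    using cdiag card_ind[of "E \<times> E" "\<lambda>p. ?u p = 2"] fE by simp
  also have "real (card (E \<times> E)) = real (card E) ^ 2" by (simp add: card_cartesian_product power2_eq_square)
  finally show ?thesis by (simp add: algebra_simps)
qed



lemma var_sum:
  fixes F :: "'b \<Rightarrow> real"
  assumes "finite A" and N: "N = real (card A)" "N > 0"
  shows "(\<Sum>x\<in>A. (F x - (\<Sum>x\<in>A. F x) / N)^2) / N = (\<Sum>x\<in>A. F x ^ 2) / N - ((\<Sum>x\<in>A. F x) / N)^2"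
proof -
  define S where "S = (\<Sum>x\<in>A. F x)"
  define Q where "Q = (\<Sum>x\<in>A. F x ^ 2)"
  have "(\<Sum>x\<in>A. (F x - S / N)^2) = (\<Sum>x\<in>A. F x ^ 2 - 2 * (S / N) * F x + (S / N)^2)"
    by (rule sum.cong) (auto simp: power2_diff)
  also have "\<dots> = Q - 2 * (S / N) * S + N * (S / N)^2"
    by (simp add: sum.distrib sum_subtractf sum_distrib_left S_def Q_def N)
  finally have "(\<Sum>x\<in>A. (F x - S / N)^2) = Q - 2 * (S / N) * S + N * (S / N)^2" .
  then show ?thesis unfolding S_def[symmetric] Q_def[symmetric] using N(2)
    by (simp add: field_simps power2_eq_square)
qed

lemma var_shift:
  fixes F :: "'b \<Rightarrow> real"
  assumes "finite A" and N: "N = real (card A)" "N > 0"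
  shows "(\<Sum>x\<in>A. (k - F x) ^ 2) / N - ((\<Sum>x\<in>A. k - F x) / N)^2 = (\<Sum>x\<in>A. F x ^ 2) / N - ((\<Sum>x\<in>A. F x) / N)^2"
proof -
  define S where "S = (\<Sum>x\<in>A. F x)"
  define Q where "Q = (\<Sum>x\<in>A. F x ^ 2)"
  have 1: "(\<Sum>x\<in>A. (k - F x) ^ 2) = N * k^2 - 2 * k * S + Q"
    by (simp add: power2_diff sum.distrib sum_subtractf sum_distrib_left S_def Q_def N)
  have 2: "(\<Sum>x\<in>A. k - F x) = N * k - S" by (simp add: sum_subtractf S_def N)
  show ?thesis unfolding 1 2 S_def[symmetric] Q_def[symmetric] using N(2)
    by (simp add: field_simps power2_eq_square)
qed

lemma sum_if_eq:
  fixes g :: "nat \<Rightarrow> real"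
  assumes "finite S" "i \<in> S"
  shows "(\<Sum>j\<in>S. if i = j then x else g j) = (\<Sum>j\<in>S. g j) + (x - g i)"
proof -
  have "(\<Sum>j\<in>S. if i = j then x else g j) = (\<Sum>j\<in>S. g j + (if i = j then x - g i else 0))"
    by (rule sum.cong) auto
  also have "\<dots> = (\<Sum>j\<in>S. g j) + (x - g i)" using assms by (simp add: sum.distrib)
  finally show ?thesis .
qed

lemma alg_II:
  fixes n n1 n2 n3 R2 R3 :: real
  assumes nz: "n \<noteq> 0" "n1 \<noteq> 0" "n2 \<noteq> 0" "n3 \<noteq> 0"
    and h: "n1 = n - 1" "n2 = n - 2" "n3 = n - 3"
  defines "e2 \<equiv> (n * n1 - R2) / 2" and "e3 \<equiv> (n * n1 * n2 - 3 * n2 * R2 + 2 * R3) / 6"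
  defines "b \<equiv> 4 / (n * n1 * n2 * n3) * (e2^2 - n1 * e2 - 3 * e3)"
  shows "(R2^2 - 4 * R3 - 2 * R2) / (n * n1 * n2 * n3) = b - 1 + 2 * (R2 / (n * n1))"
  unfolding b_def e2_def e3_def
  using nz apply (simp add: field_simps power2_eq_square power3_eq_cube)
  unfolding h by (simp add: algebra_simps)

lemma alg_I:
  fixes n n1 n2 n3 R2 R3 :: real
  assumes nz: "n \<noteq> 0" "n1 \<noteq> 0" "n2 \<noteq> 0" "n3 \<noteq> 0"
    and h: "n1 = n - 1" "n2 = n - 2" "n3 = n - 3"
  defines "e2 \<equiv> (n * n1 - R2) / 2" and "e3 \<equiv> (n * n1 * n2 - 3 * n2 * R2 + 2 * R3) / 6"
  defines "b \<equiv> 4 / (n * n1 * n2 * n3) * (e2^2 - n1 * e2 - 3 * e3)"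
  defines "a \<equiv> e2 / (n * n1) + 3 * e3 / (n * n1 * n2)"
  shows "R3 / (n * n1 * n2) - (R2^2 - 4 * R3 - 2 * R2) / (n * n1 * n2 * n3) = a - b"
  unfolding a_def b_def e2_def e3_def
  using nz apply (simp add: field_simps power2_eq_square power3_eq_cube)
  unfolding h by (simp add: algebra_simps)

lemma alg_final:
  fixes X Y K a b E2 m S2 :: real
  assumes I: "Y - K = a - b" and II: "K = b - 1 + 2 * X" and III: "2 * E2 = 1 - X"
  shows "m * X + (S2 - 2 * m) * Y + (m^2 + m - S2) * K - (m * X)^2
    = (a - b) * S2 + m^2 * (b - 4 * E2^2) + m * (2 * E2 - 2 * a + b)"
proof -
  have b: "b = K + 1 - 2 * X" using II by simp
  have a: "a = Y + 1 - 2 * X" using I b by simp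
  have E: "E2 = (1 - X) / 2" using III by simp
  show ?thesis unfolding a b E by (simp add: field_simps power2_eq_square)
qed

lemma alg_Mi:
  fixes p2 p3 p4 m S2 :: real
  shows "m * p2 + (S2 - 2 * m) * p3 + (m^2 + m - S2) * p4 - (m * p2)^2
    = (p3 - p4) * S2 - (p2^2 - p4) * m^2 + (p2 - 2 * p3 + p4) * m"
  by (simp add: algebra_simps power2_eq_square)

lemma key_Mi:
  fixes c n :: real
  assumes "n \<ge> 4"
  shows "ffact c 3 / ffact n 3 - ffact c 4 / ffact n 4 = ffact c 3 * (n - c) / ffact n 4"
proof -
  have c4: "ffact c 4 = ffact c 3 * (c - 3)" and n4: "ffact n 4 = ffact n 3 * (n - 3)"
    unfolding ffact3 ffact4 by simp_all
  have "ffact n 3 \<noteq> 0" "n - 3 \<noteq> 0" using assms unfolding ffact3 by auto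
  then show ?thesis unfolding c4 n4 by (simp add: field_simps)
qed



theorem theorem2p3:
  fixes V :: "'a set" and E :: "'a set set" and s :: nat and c :: "nat \<Rightarrow> nat"
  assumes G: "simple_graph V E"
    and comp: "composition (card V) s c"
    and n4: "card V \<ge> 4"
  defines "n \<equiv> real (card V)" and "m \<equiv> real (card E)"
    and "P \<equiv> coloring_pmf V s c"
    and "e2 \<equiv> esym 2 s (\<lambda>i. real (c i))" and "e3 \<equiv> esym 3 s (\<lambda>i. real (c i))"
    and "S2 \<equiv> real (Sigma2 V E)"
  defines "a \<equiv> e2 / ffact n 2 + 3 * e3 / ffact n 3"
    and "b \<equiv> 4 / ffact n 4 * (e2^2 - (n - 1) * e2 - 3 * e3)"
  shows
    "(\<forall>i\<in>{1..s}.
        measure_pmf.expectation P (Mi E i) = m * ffact (c i) 2 / ffact n 2 \<and>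
        measure_pmf.variance P (Mi E i) =
            ffact (c i) 3 * (n - real (c i)) / ffact n 4 * S2
          - ((ffact (c i) 2 / ffact n 2)^2 - ffact (c i) 4 / ffact n 4) * m^2
          + (ffact (c i) 2 / ffact n 2 - 2 * (ffact (c i) 3 / ffact n 3)
             + ffact (c i) 4 / ffact n 4) * m)
     \<and> measure_pmf.expectation P (Bichr E) = 2 * m * e2 / ffact n 2
     \<and> measure_pmf.expectation P (Mono E) = m / ffact n 2 * (\<Sum>i=1..s. ffact (c i) 2)
     \<and> measure_pmf.variance P (Bichr E) =
          (a - b) * S2 + m^2 * (b - 4 * (e2 / ffact n 2)^2) + m * (2 * e2 / ffact n 2 - 2 * a + b)
     \<and> measure_pmf.variance P (Mono E) =
          (a - b) * S2 + m^2 * (b - 4 * (e2 / ffact n 2)^2) + m * (2 * e2 / ffact n 2 - 2 * a + b)"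
proof -
  let ?C = "colorings V s c"
  have V: "finite V" and EV: "\<forall>e\<in>E. e \<subseteq> V \<and> card e = 2" using G unfolding simple_graph_def by auto
  have fE: "finite E" by (rule finite_subset[of _ "Pow V"]) (use EV V in auto)
  have fC: "finite ?C" by (rule fin_col[OF V])
  have Cne: "?C \<noteq> {}" by (rule col_nonempty[OF V comp])
  define N where "N = real (card ?C)"
  have Npos: "N > 0" unfolding N_def using fC Cne by (simp add: card_gt_0_iff)
  have Exp: "measure_pmf.expectation P F = (\<Sum>f\<in>?C. F f) / N" for F :: "('a \<Rightarrow> nat) \<Rightarrow> real"
    unfolding P_def coloring_pmf_def N_def by (rule integral_pmf_of_set[OF Cne fC])
  have Var: "measure_pmf.variance P F = (\<Sum>f\<in>?C. F f ^ 2) / N - ((\<Sum>f\<in>?C. F f) / N)^2"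
    for F :: "('a \<Rightarrow> nat) \<Rightarrow> real"
    unfolding Exp by (rule var_sum[OF fC N_def Npos])
  have MiS: "Mi E i f = (\<Sum>e\<in>E. Ind i e f)" for i f
    unfolding Mi_def Ind_def using card_ind[OF fE] by simp
  have MonoS: "Mono E f = (\<Sum>i=1..s. Mi E i f)" if f: "f \<in> ?C" for f
  proof -
    have "Mono E f = (\<Sum>e\<in>E. if \<exists>i. \<forall>v\<in>e. f v = i then 1 else 0)"
      unfolding Mono_def using card_ind[OF fE] by simp
    also have "\<dots> = (\<Sum>e\<in>E. \<Sum>i=1..s. Ind i e f)"
    proof (rule sum.cong[OF refl])
      fix e assume e: "e \<in> E"
      have ce: "card e = 2" and eV: "e \<subseteq> V" using EV e by auto
      then have "e \<noteq> {}" by auto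
      then obtain v0 where v0: "v0 \<in> e" by blast
      have "v0 \<in> V" using v0 eV by blast
      then have fv0: "f v0 \<in> {1..s}" by (rule col_range[OF f])
      have "(\<Sum>i=1..s. Ind i e f) = (\<Sum>i=1..s. if f v0 = i then (if \<forall>v\<in>e. f v = f v0 then 1 else 0) else 0)"
        by (rule sum.cong[OF refl]) (use v0 in \<open>unfold Ind_def, metis\<close>)
      also have "\<dots> = (if \<forall>v\<in>e. f v = f v0 then 1 else 0)" using fv0 by simp
      also have "\<dots> = (if \<exists>i. \<forall>v\<in>e. f v = i then 1 else 0)" using v0 by metis
      finally show "(if \<exists>i. \<forall>v\<in>e. f v = i then 1 else 0) = (\<Sum>i=1..s. Ind i e f)" by simp
    qed
    also have "\<dots> = (\<Sum>i=1..s. Mi E i f)" unfolding MiS by (rule sum.swap)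
    finally show ?thesis .
  qed
  have BichrS: "Bichr E f = m - Mono E f" for f
  proof -
    have "Bichr E f = (\<Sum>e\<in>E. if \<not> (\<exists>i. \<forall>v\<in>e. f v = i) then 1 else 0)"
      unfolding Bichr_def using card_ind[OF fE] by simp
    also have "\<dots> = (\<Sum>e\<in>E. 1 - (if \<exists>i. \<forall>v\<in>e. f v = i then 1 else 0))"
      by (rule sum.cong) auto
    also have "\<dots> = m - Mono E f"
      unfolding Mono_def m_def using card_ind[OF fE] by (simp add: sum_subtractf)
    finally show ?thesis .
  qed
  have EMM: "(\<Sum>f\<in>?C. Mi E i f * Mi E j f) / N = m * Gf n c i j 2 + (S2 - 2 * m) * Gf n c i j 3
      + (m^2 + m - S2) * Gf n c i j 4" if i: "i \<in> {1..s}" and j: "j \<in> {1..s}" for i j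
  proof -
    have "(\<Sum>f\<in>?C. Mi E i f * Mi E j f) = (\<Sum>f\<in>?C. \<Sum>p\<in>E \<times> E. Ind i (fst p) f * Ind j (snd p) f)"
      unfolding MiS by (simp add: sum_product sum.cartesian_product case_prod_unfold)
    also have "\<dots> = (\<Sum>p\<in>E \<times> E. \<Sum>f\<in>?C. Ind i (fst p) f * Ind j (snd p) f)" by (rule sum.swap)
    finally have "(\<Sum>f\<in>?C. Mi E i f * Mi E j f) / N = (\<Sum>p\<in>E \<times> E. (\<Sum>f\<in>?C. Ind i (fst p) f * Ind j (snd p) f) / N)"
      by (simp add: sum_divide_distrib)
    also have "\<dots> = (\<Sum>p\<in>E \<times> E. Gf n c i j (card (fst p \<union> snd p)))"
      by (rule sum.cong[OF refl]) (use EIJ[OF G comp i j] in \<open>auto simp: N_def n_def\<close>)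
    also have "\<dots> = m * Gf n c i j 2 + (S2 - 2 * m) * Gf n c i j 3 + (m^2 + m - S2) * Gf n c i j 4"
      unfolding m_def S2_def by (rule pairsum[OF G])
    finally show ?thesis .
  qed
  have EM1: "(\<Sum>f\<in>?C. Mi E i f) / N = m * (ffact (c i) 2 / ffact n 2)" if i: "i \<in> {1..s}" for i
  proof -
    have II: "Ind i e f * Ind i e f = Ind i e f" for e f by (simp add: Ind_def)
    have "(\<Sum>f\<in>?C. Mi E i f) = (\<Sum>f\<in>?C. \<Sum>e\<in>E. Ind i e f * Ind i e f)" by (simp only: MiS II)
    also have "\<dots> = (\<Sum>e\<in>E. \<Sum>f\<in>?C. Ind i e f * Ind i e f)" by (rule sum.swap)
    finally have "(\<Sum>f\<in>?C. Mi E i f) / N = (\<Sum>e\<in>E. (\<Sum>f\<in>?C. Ind i e f * Ind i e f) / N)"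
      by (simp add: sum_divide_distrib)
    also have "\<dots> = (\<Sum>e\<in>E. ffact (c i) 2 / ffact n 2)"
      by (rule sum.cong[OF refl]) (use EIJ[OF G comp i i] EV in \<open>auto simp: Gf_def N_def n_def\<close>)
    finally show ?thesis by (simp add: m_def)
  qed
  have n4': "n \<ge> 4" unfolding n_def using n4 by simp
  have nz: "n \<noteq> 0" "n - 1 \<noteq> 0" "n - 2 \<noteq> 0" "n - 3 \<noteq> 0" using n4' by auto
  define R2 where "R2 = (\<Sum>i=1..s. ffact (c i) 2)"
  define R3 where "R3 = (\<Sum>i=1..s. ffact (c i) 3)"
  have hn: "(\<Sum>i=1..s. real (c i)) = n"
  proof -
    have "(\<Sum>i=1..s. c i) = card V" using comp unfolding composition_def by simp
    then show ?thesis unfolding n_def by (metis of_nat_sum)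
  qed
  have P2: "(\<Sum>i=1..s. real (c i) ^ 2) = R2 + n"
  proof -
    have "(\<Sum>i=1..s. real (c i) ^ 2) = (\<Sum>i=1..s. ffact (c i) 2 + real (c i))"
      by (rule sum.cong) (auto simp: ffact2 power2_eq_square algebra_simps)
    then show ?thesis by (simp only: sum.distrib R2_def hn)
  qed
  have P3: "(\<Sum>i=1..s. real (c i) ^ 3) = R3 + 3 * R2 + n"
  proof -
    have "(\<Sum>i=1..s. real (c i) ^ 3) = (\<Sum>i=1..s. ffact (c i) 3 + 3 * ffact (c i) 2 + real (c i))"
      by (rule sum.cong) (auto simp: ffact2 ffact3 power3_eq_cube algebra_simps)
    then show ?thesis by (simp only: sum.distrib R2_def R3_def hn sum_distrib_left[symmetric])
  qed
  have he2: "e2 = (n * (n - 1) - R2) / 2"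
    unfolding e2_def esym_2 hn P2 by (simp add: power2_eq_square algebra_simps)
  have he3: "e3 = (n * (n - 1) * (n - 2) - 3 * (n - 2) * R2 + 2 * R3) / 6"
    unfolding e3_def esym_3 hn P2 P3 by (simp add: power2_eq_square power3_eq_cube algebra_simps)
  have sq: "(\<Sum>f\<in>?C. F f ^ 2) = (\<Sum>f\<in>?C. F f * F f)" for F :: "('a \<Rightarrow> nat) \<Rightarrow> real"
    by (simp add: power2_eq_square)
  have part1: "measure_pmf.expectation P (Mi E i) = m * ffact (c i) 2 / ffact n 2 \<and>
        measure_pmf.variance P (Mi E i) =
            ffact (c i) 3 * (n - real (c i)) / ffact n 4 * S2
          - ((ffact (c i) 2 / ffact n 2)^2 - ffact (c i) 4 / ffact n 4) * m^2
          + (ffact (c i) 2 / ffact n 2 - 2 * (ffact (c i) 3 / ffact n 3)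
             + ffact (c i) 4 / ffact n 4) * m" if i: "i \<in> {1..s}" for i
  proof
    show "measure_pmf.expectation P (Mi E i) = m * ffact (c i) 2 / ffact n 2"
      unfolding Exp EM1[OF i] by simp
    have "measure_pmf.variance P (Mi E i) = m * (ffact (c i) 2 / ffact n 2) + (S2 - 2 * m) * (ffact (c i) 3 / ffact n 3)
       + (m^2 + m - S2) * (ffact (c i) 4 / ffact n 4) - (m * (ffact (c i) 2 / ffact n 2))^2"
      unfolding Var sq add_divide_distrib EMM[OF i i] EM1[OF i] by (simp add: Gf_def)
    also have "\<dots> = (ffact (c i) 3 / ffact n 3 - ffact (c i) 4 / ffact n 4) * S2
       - ((ffact (c i) 2 / ffact n 2)^2 - ffact (c i) 4 / ffact n 4) * m^2
       + (ffact (c i) 2 / ffact n 2 - 2 * (ffact (c i) 3 / ffact n 3) + ffact (c i) 4 / ffact n 4) * m"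
      by (rule alg_Mi)
    finally show "measure_pmf.variance P (Mi E i) =
            ffact (c i) 3 * (n - real (c i)) / ffact n 4 * S2
          - ((ffact (c i) 2 / ffact n 2)^2 - ffact (c i) 4 / ffact n 4) * m^2
          + (ffact (c i) 2 / ffact n 2 - 2 * (ffact (c i) 3 / ffact n 3)
             + ffact (c i) 4 / ffact n 4) * m"
      unfolding key_Mi[OF n4'] .
  qed
  have EMono: "(\<Sum>f\<in>?C. Mono E f) / N = m / ffact n 2 * R2"
  proof -
    have "(\<Sum>f\<in>?C. Mono E f) = (\<Sum>f\<in>?C. \<Sum>i=1..s. Mi E i f)" using MonoS by (rule sum.cong[OF refl])
    also have "\<dots> = (\<Sum>i=1..s. \<Sum>f\<in>?C. Mi E i f)" by (rule sum.swap)
    finally have "(\<Sum>f\<in>?C. Mono E f) / N = (\<Sum>i=1..s. (\<Sum>f\<in>?C. Mi E i f) / N)"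
      by (simp add: sum_divide_distrib)
    also have "\<dots> = (\<Sum>i=1..s. m * (ffact (c i) 2 / ffact n 2))" using EM1 by (rule sum.cong[OF refl])
    finally show ?thesis by (simp add: R2_def sum_distrib_left sum_divide_distrib)
  qed
  have f2nz: "ffact n 2 \<noteq> 0" using nz unfolding ffact2 by simp
  have EBichr: "measure_pmf.expectation P (Bichr E) = 2 * m * e2 / ffact n 2"
  proof -
    have "measure_pmf.expectation P (Bichr E) = (\<Sum>f\<in>?C. m - Mono E f) / N" unfolding Exp BichrS ..
    also have "\<dots> = m - (\<Sum>f\<in>?C. Mono E f) / N"
      using Npos by (simp add: sum_subtractf N_def field_simps)
    also have "\<dots> = 2 * m * e2 / ffact n 2" unfolding EMono he2 using f2nz
      by (simp add: field_simps ffact2)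
    finally show ?thesis .
  qed
  have g23: "Gf n c i j u = (if i = j then ffact (c i) u / ffact n u else 0)" if "u \<noteq> 4" for i j u
    using that by (simp add: Gf_def)
  have G2: "(\<Sum>i=1..s. \<Sum>j=1..s. Gf n c i j 2) = R2 / ffact n 2"
  proof -
    have "(\<Sum>i=1..s. \<Sum>j=1..s. Gf n c i j 2) = (\<Sum>i=1..s. ffact (c i) 2 / ffact n 2)"
      by (rule sum.cong[OF refl]) (simp add: g23)
    then show ?thesis by (simp add: R2_def sum_divide_distrib)
  qed
  have G3: "(\<Sum>i=1..s. \<Sum>j=1..s. Gf n c i j 3) = R3 / ffact n 3"
  proof -
    have "(\<Sum>i=1..s. \<Sum>j=1..s. Gf n c i j 3) = (\<Sum>i=1..s. ffact (c i) 3 / ffact n 3)"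
      by (rule sum.cong[OF refl]) (simp add: g23)
    then show ?thesis by (simp add: R3_def sum_divide_distrib)
  qed
  have G4: "(\<Sum>i=1..s. \<Sum>j=1..s. Gf n c i j 4) = (R2^2 - 4 * R3 - 2 * R2) / ffact n 4"
  proof -
    let ?q = "\<lambda>i j. ffact (c i) 2 * ffact (c j) 2 / ffact n 4"
    have "(\<Sum>i=1..s. \<Sum>j=1..s. Gf n c i j 4) = (\<Sum>i=1..s. (\<Sum>j=1..s. ?q i j) + (ffact (c i) 4 / ffact n 4 - ?q i i))"
    proof (rule sum.cong[OF refl])
      fix i assume i: "i \<in> {1..s}"
      have "(\<Sum>j=1..s. Gf n c i j 4) = (\<Sum>j=1..s. if i = j then ffact (c i) 4 / ffact n 4 else ?q i j)"
        by (rule sum.cong[OF refl]) (simp add: Gf_def)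
      also have "\<dots> = (\<Sum>j=1..s. ?q i j) + (ffact (c i) 4 / ffact n 4 - ?q i i)"
        by (rule sum_if_eq) (use i in auto)
      finally show "(\<Sum>j=1..s. Gf n c i j 4) = (\<Sum>j=1..s. ?q i j) + (ffact (c i) 4 / ffact n 4 - ?q i i)" .
    qed
    also have "\<dots> = (\<Sum>i=1..s. \<Sum>j=1..s. ?q i j) + (\<Sum>i=1..s. (- 4 * ffact (c i) 3 - 2 * ffact (c i) 2) / ffact n 4)"
    proof -
      have "ffact (c i) 4 / ffact n 4 - ?q i i = (- 4 * ffact (c i) 3 - 2 * ffact (c i) 2) / ffact n 4" for i
        by (simp add: ffact2 ffact3 ffact4 diff_divide_distrib[symmetric] algebra_simps)
      then show ?thesis by (simp add: sum.distrib)
    qed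
    also have "(\<Sum>i=1..s. \<Sum>j=1..s. ?q i j) = R2^2 / ffact n 4"
      by (simp add: R2_def power2_eq_square sum_product sum_divide_distrib)
    also have "(\<Sum>i=1..s. (- 4 * ffact (c i) 3 - 2 * ffact (c i) 2) / ffact n 4) = (- 4 * R3 - 2 * R2) / ffact n 4"
      by (simp add: R2_def R3_def sum_divide_distrib[symmetric] sum_subtractf sum_distrib_left)
    finally show ?thesis by (simp add: diff_divide_distrib add_divide_distrib)
  qed
  have VMono: "measure_pmf.variance P (Mono E) =
          (a - b) * S2 + m^2 * (b - 4 * (e2 / ffact n 2)^2) + m * (2 * e2 / ffact n 2 - 2 * a + b)"
  proof -
    have "(\<Sum>f\<in>?C. Mono E f ^ 2) = (\<Sum>f\<in>?C. \<Sum>i=1..s. \<Sum>j=1..s. Mi E i f * Mi E j f)"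
      by (rule sum.cong[OF refl]) (simp add: MonoS power2_eq_square sum_product)
    also have "\<dots> = (\<Sum>i=1..s. \<Sum>j=1..s. \<Sum>f\<in>?C. Mi E i f * Mi E j f)"
      by (simp add: sum.swap[of _ ?C])
    finally have "(\<Sum>f\<in>?C. Mono E f ^ 2) / N = (\<Sum>i=1..s. \<Sum>j=1..s. (\<Sum>f\<in>?C. Mi E i f * Mi E j f) / N)"
      by (simp add: sum_divide_distrib)
    also have "\<dots> = (\<Sum>i=1..s. \<Sum>j=1..s. m * Gf n c i j 2 + (S2 - 2 * m) * Gf n c i j 3
      + (m^2 + m - S2) * Gf n c i j 4)"
      using EMM by simp
    also have "\<dots> = m * (\<Sum>i=1..s. \<Sum>j=1..s. Gf n c i j 2) + (S2 - 2 * m) * (\<Sum>i=1..s. \<Sum>j=1..s. Gf n c i j 3)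
      + (m^2 + m - S2) * (\<Sum>i=1..s. \<Sum>j=1..s. Gf n c i j 4)"
      by (simp add: sum.distrib sum_distrib_left)
    finally have M2: "(\<Sum>f\<in>?C. Mono E f ^ 2) / N = m * (R2 / ffact n 2) + (S2 - 2 * m) * (R3 / ffact n 3)
      + (m^2 + m - S2) * ((R2^2 - 4 * R3 - 2 * R2) / ffact n 4)" unfolding G2 G3 G4 .
    have I: "R3 / ffact n 3 - (R2^2 - 4 * R3 - 2 * R2) / ffact n 4 = a - b"
      unfolding a_def b_def he2 he3 ffact2 ffact3 ffact4
      using alg_I[of n "n - 1" "n - 2" "n - 3" R3 R2] nz by simp
    have II: "(R2^2 - 4 * R3 - 2 * R2) / ffact n 4 = b - 1 + 2 * (R2 / ffact n 2)"
      unfolding b_def he2 he3 ffact2 ffact4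
      using alg_II[of n "n - 1" "n - 2" "n - 3" R2 R3] nz by simp
    have III: "2 * (e2 / ffact n 2) = 1 - R2 / ffact n 2"
      unfolding he2 using f2nz by (simp add: field_simps ffact2)
    have "measure_pmf.variance P (Mono E) = m * (R2 / ffact n 2) + (S2 - 2 * m) * (R3 / ffact n 3)
      + (m^2 + m - S2) * ((R2^2 - 4 * R3 - 2 * R2) / ffact n 4) - (m * (R2 / ffact n 2))^2"
      unfolding Var M2 EMono by simp
    also have "\<dots> = (a - b) * S2 + m^2 * (b - 4 * (e2 / ffact n 2)^2) + m * (2 * (e2 / ffact n 2) - 2 * a + b)"
      by (rule alg_final[OF I II III])
    finally show ?thesis by simp
  qed
  have VBichr: "measure_pmf.variance P (Bichr E) = measure_pmf.variance P (Mono E)"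
    unfolding Var BichrS by (rule var_shift[OF fC N_def Npos])
  have EMono': "measure_pmf.expectation P (Mono E) = m / ffact n 2 * (\<Sum>i=1..s. ffact (c i) 2)"
    unfolding Exp EMono R2_def ..
  have P1: "\<forall>i\<in>{1..s}.
        measure_pmf.expectation P (Mi E i) = m * ffact (c i) 2 / ffact n 2 \<and>
        measure_pmf.variance P (Mi E i) =
            ffact (c i) 3 * (n - real (c i)) / ffact n 4 * S2
          - ((ffact (c i) 2 / ffact n 2)^2 - ffact (c i) 4 / ffact n 4) * m^2
          + (ffact (c i) 2 / ffact n 2 - 2 * (ffact (c i) 3 / ffact n 3)
             + ffact (c i) 4 / ffact n 4) * m"
    using part1 by blast
  show ?thesis
    using P1 EBichr EMono' VMono VBichr[unfolded VMono] by blast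
qed

end
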